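(* For every $N\ge2$, every unistochastic $N\times N$ matrix $B=V\odot\overline{V}$ ($V\in U(N)$) arises as the hyper-decoherence of some unistochastic channel: there exists $U\in U(N^2)$ with $B=\mathcal{D}_h(\Psi_U)$. That is, $\mathcal{U}_N^C\subseteq\mathcal{D}_h(\mathcal{U}_N^Q)$.
   Context: $\odot$ is the entrywise (Hadamard) product; $\mathcal{U}_N^C=\{V\odot\overline{V}:V\in U(N)\}$. For $U\in U(N^2)$ acting on $\mathbb{C}^N\otimes\mathbb{C}^N_E$, the unistochastic channel is $\Psi_U(\rho)=\mathrm{Tr}_E[U(\rho\otimes\mathbb{I}_N/N)U^\dagger]$, and $\mathcal{U}_N^Q=\{\Psi_U:U\in U(N^2)\}$. Hyper-decoherence of a channel $\Phi$ is the $N\times N$ matrix $\mathcal{D}_h(\Phi)_{ij}=\mathrm{Tr}[|i\rangle\langle i|\,\Phi(|j\rangle\langle j|)]$. *)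

theory Defs
  imports Complex_Main
begin

text \<open>Square complex matrices represented as functions nat => nat => complex;
  only entries with indices below the stated dimension are meaningful.
  The composite space C^N (x) C^N_E is indexed by a*N + e (a system, e environment).\<close>

type_synonym cmat = "nat \<Rightarrow> nat \<Rightarrow> complex"

definition mmult :: "nat \<Rightarrow> cmat \<Rightarrow> cmat \<Rightarrow> cmat" where
  "mmult n A B = (\<lambda>i j. \<Sum>k<n. A i k * B k j)"

definition adj :: "cmat \<Rightarrow> cmat" where
  "adj A = (\<lambda>i j. cnj (A j i))"

definition idm :: cmat where
  "idm = (\<lambda>i j. if i = j then 1 else 0)"

definition unitary_mat :: "nat \<Rightarrow> cmat \<Rightarrow> bool" where
  "unitary_mat n U \<longleftrightarrow>
     (\<forall>i<n. \<forall>j<n. mmult n (adj U) U i j = idm i j \<and> mmult n U (adj U) i j = idm i j)"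

definition kron :: "nat \<Rightarrow> cmat \<Rightarrow> cmat \<Rightarrow> cmat" where
  "kron N A B = (\<lambda>i j. A (i div N) (j div N) * B (i mod N) (j mod N))"

definition ptrace_E :: "nat \<Rightarrow> cmat \<Rightarrow> cmat" where
  "ptrace_E N M = (\<lambda>a b. \<Sum>e<N. M (a * N + e) (b * N + e))"

definition mtrace :: "nat \<Rightarrow> cmat \<Rightarrow> complex" where
  "mtrace n M = (\<Sum>i<n. M i i)"

definition ketbra :: "nat \<Rightarrow> cmat" where
  "ketbra j = (\<lambda>a b. if a = j \<and> b = j then 1 else 0)"

definition unistochastic_channel :: "nat \<Rightarrow> cmat \<Rightarrow> cmat \<Rightarrow> cmat" where
  "unistochastic_channel N U \<rho> =
     ptrace_E N (mmult (N^2) (mmult (N^2) U (kron N \<rho> (\<lambda>i j. idm i j / of_nat N))) (adj U))"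

definition hyper_decoherence :: "nat \<Rightarrow> (cmat \<Rightarrow> cmat) \<Rightarrow> cmat" where
  "hyper_decoherence N \<Phi> = (\<lambda>i j. mtrace N (mmult N (ketbra i) (\<Phi> (ketbra j))))"

end

theory Submission
  imports Defs
begin

lemma sum_split_add: "(\<Sum>k<m+n. f k) = (\<Sum>k<m. f k) + (\<Sum>k<n. f (m+k))" for f :: "nat \<Rightarrow> complex"
  by (induction n) (simp_all add: add_ac)

lemma sum_grid: "(\<Sum>k<m*N. f k) = (\<Sum>a<m. \<Sum>e<N. f (a*N+e))" for f :: "nat \<Rightarrow> complex"
proof (induction m)
  case 0 then show ?case by simp
next
  case (Suc m)
  have "(\<Sum>k<Suc m*N. f k) = (\<Sum>k<m*N + N. f k)" by (simp add: add.commute)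
  also have "\<dots> = (\<Sum>k<m*N. f k) + (\<Sum>e<N. f (m*N+e))" by (rule sum_split_add)
  finally show ?case using Suc by simp
qed

lemma divmod_grid:
  fixes a e N :: nat
  assumes "e < N" shows "(a*N+e) div N = a" "(a*N+e) mod N = e"
proof -
  have "N > 0" using assms by simp
  then show "(a*N+e) div N = a" "(a*N+e) mod N = e" using assms by (simp_all add: add.commute)
qed

lemma kron_mult:
  assumes "N > 0"
  shows "mmult (N*N) (kron N A B) (kron N C D) = kron N (mmult N A C) (mmult N B D)"
proof (intro ext)
  fix i j
  have "mmult (N*N) (kron N A B) (kron N C D) i j =
     (\<Sum>a<N. \<Sum>e<N. A (i div N) a * B (i mod N) e * (C a (j div N) * D e (j mod N)))"
    unfolding mmult_def kron_def by (subst sum_grid) (simp add: divmod_grid)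
  also have "\<dots> = (\<Sum>a<N. A (i div N) a * C a (j div N)) * (\<Sum>e<N. B (i mod N) e * D e (j mod N))"
    by (simp add: sum_product mult_ac)
  finally show "mmult (N*N) (kron N A B) (kron N C D) i j = kron N (mmult N A C) (mmult N B D) i j"
    by (simp add: kron_def mmult_def)
qed

lemma adj_kron: "adj (kron N A B) = kron N (adj A) (adj B)"
  by (simp add: adj_def kron_def fun_eq_iff)

lemma adj_idm: "adj idm = idm"
  by (simp add: adj_def idm_def fun_eq_iff)

lemma mmult_idm_left: assumes "i < n" shows "mmult n idm B i j = B i j"
proof -
  have "mmult n idm B i j = (\<Sum>k<n. if k = i then B k j else 0)"
    unfolding mmult_def idm_def by (rule sum.cong) auto
  then show ?thesis using assms by simp
qed

lemma kron_idm: "kron N idm idm i j = idm i j" if "N > 0"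
proof -
  have "(i div N = j div N \<and> i mod N = j mod N) \<longleftrightarrow> i = j"
    by (metis div_mult_mod_eq)
  then show ?thesis by (auto simp: kron_def idm_def)
qed

lemma mult_ketbra_right: "j < N \<Longrightarrow> mmult N A (ketbra j) a b = (if b = j then A a j else 0)"
  unfolding mmult_def ketbra_def by (auto simp: if_distrib cong: if_cong)
lemma mult_ketbra_left: assumes "i < N" shows "mmult N (ketbra i) M a b = (if a = i then M i b else 0)"
proof -
  have "mmult N (ketbra i) M a b = (\<Sum>k<N. if k = i then (if a = i then M k b else 0) else 0)"
    unfolding mmult_def ketbra_def by (intro sum.cong) auto
  then show ?thesis using assms by simp
qed
lemma tr_ketbra: assumes "i < N" shows "mtrace N (mmult N (ketbra i) M) = M i i"
proof -
  have "mtrace N (mmult N (ketbra i) M) = (\<Sum>k<N. if k = i then M i k else 0)"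
    unfolding mtrace_def using assms by (intro sum.cong) (auto simp: mult_ketbra_left)
  then show ?thesis using assms by simp
qed
lemma conj_ketbra: assumes "j < N" shows "mmult N (mmult N V (ketbra j)) (adj V) i i = V i j * cnj (V i j)"
proof -
  have "mmult N (mmult N V (ketbra j)) (adj V) i i = (\<Sum>k<N. if k = j then V i j * cnj (V i k) else 0)"
    unfolding mmult_def[of N "mmult N V (ketbra j)"] using assms by (intro sum.cong) (auto simp: mult_ketbra_right adj_def)
  then show ?thesis using assms by simp
qed

lemma mmult_idm_right: assumes "j < n" shows "mmult n A idm i j = A i j"
proof -
  have "mmult n A idm i j = (\<Sum>k<n. if k = j then A i k else 0)"
    unfolding mmult_def idm_def by (rule sum.cong) auto
  then show ?thesis using assms by simp
qed

theorem proposition9: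
  fixes N :: nat and V :: cmat
  assumes "N \<ge> 2" and "unitary_mat N V"
  shows "\<exists>U. unitary_mat (N^2) U \<and>
           (\<forall>i<N. \<forall>j<N. hyper_decoherence N (unistochastic_channel N U) i j = V i j * cnj (V i j))"
proof (intro exI conjI allI impI)
  have N0: "N > 0" using assms(1) by simp
  let ?U = "kron N V idm"
  have sq: "N^2 = N*N" by (simp add: power2_eq_square)
  have ii': "i mod N < N" for i using N0 by simp
  have ii2: "i div N < N" if "i < N*N" for i using that by (simp add: less_mult_imp_div_less)
  have mII: "mmult N idm idm i j = idm i j" if "i < N" for i j using that by (rule mmult_idm_left)
  have VV1: "mmult N (adj V) V a b = idm a b" if "a < N" "b < N" for a b
    using assms(2) that unfolding unitary_mat_def by blast
  have VV2: "mmult N V (adj V) a b = idm a b" if "a < N" "b < N" for a b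
    using assms(2) that unfolding unitary_mat_def by blast
  show "unitary_mat (N^2) ?U"
    unfolding unitary_mat_def sq
  proof (intro allI impI conjI)
    fix i j assume ij: "i < N*N" "j < N*N"
    have "mmult (N*N) (adj ?U) ?U i j = kron N (mmult N (adj V) V) (mmult N idm idm) i j"
      unfolding adj_kron adj_idm kron_mult[OF N0] by (rule refl)
    also have "\<dots> = kron N idm idm i j"
      unfolding kron_def using VV1[OF ii2[OF ij(1)] ii2[OF ij(2)]] mII[OF ii'[of i]] by simp
    finally show "mmult (N*N) (adj ?U) ?U i j = idm i j" using kron_idm N0 by simp
    have "mmult (N*N) ?U (adj ?U) i j = kron N (mmult N V (adj V)) (mmult N idm idm) i j"
      unfolding adj_kron adj_idm kron_mult[OF N0] by (rule refl)
    also have "\<dots> = kron N idm idm i j"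
      unfolding kron_def using VV2[OF ii2[OF ij(1)] ii2[OF ij(2)]] mII[OF ii'[of i]] by simp
    finally show "mmult (N*N) ?U (adj ?U) i j = idm i j" using kron_idm N0 by simp
  qed
  fix i j assume i: "i < N" and j: "j < N"
  let ?D = "\<lambda>i j. idm i j / of_nat N"
  let ?R = "mmult N (mmult N V (ketbra j)) (adj V)"
  have ch: "unistochastic_channel N ?U (ketbra j) a b = ?R a b" for a b
  proof -
    have "unistochastic_channel N ?U (ketbra j) a b =
       ptrace_E N (kron N ?R (mmult N (mmult N idm ?D) (adj idm))) a b"
      unfolding unistochastic_channel_def sq adj_kron kron_mult[OF N0] by (rule refl)
    also have "\<dots> = (\<Sum>e<N. ?R a b * (mmult N (mmult N idm ?D) idm e e))"
      unfolding ptrace_E_def kron_def adj_idm by (intro sum.cong) (simp_all add: divmod_grid)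
    also have "\<dots> = (\<Sum>e<N. ?R a b * (1 / of_nat N))"
    proof (rule sum.cong)
      fix e assume "e \<in> {..<N}"
      then have e: "e < N" by simp
      have "mmult N (mmult N idm ?D) idm e e = mmult N idm ?D e e"
        using e by (rule mmult_idm_right)
      also have "\<dots> = 1 / of_nat N" using e by (subst mmult_idm_left) (simp_all add: idm_def)
      finally show "?R a b * mmult N (mmult N idm ?D) idm e e = ?R a b * (1 / of_nat N)" by simp
    qed simp
    also have "\<dots> = ?R a b" using N0 by simp
    finally show ?thesis .
  qed
  have "hyper_decoherence N (unistochastic_channel N ?U) i j
      = unistochastic_channel N ?U (ketbra j) i i"
    unfolding hyper_decoherence_def using i by (rule tr_ketbra)
  also have "\<dots> = ?R i i" using ch by simp
  also have "\<dots> = V i j * cnj (V i j)"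
    using j by (rule conj_ketbra)
  finally show "hyper_decoherence N (unistochastic_channel N ?U) i j = V i j * cnj (V i j)" .
qed

end
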